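(* Let $F$ be a field of characteristic zero, $k$ a positive integer, and $E$ the infinite-dimensional Grassmann algebra over $F$ graded by $\deg(\cdot)_{k^*}$. Let \[R=\begin{pmatrix} E & E\\ 0 & E\end{pmatrix}\] with the $\mathbb{Z}_2$-grading induced by that of $E$. Then $T_{\mathbb{Z}_2}(E)\,T_{\mathbb{Z}_2}(E)\subsetneq T_{\mathbb{Z}_2}(R)$.
   Context: $E$ is the unitary algebra generated by $e_1,e_2,\dots$ subject to $e_ie_j=-e_je_i$; it has basis $1$ and $e_{i_1}\cdots e_{i_s}$ ($i_1<\cdots<i_s$). The grading $\deg(\cdot)_{k^*}$ gives $e_i$ degree $1\in\mathbb{Z}_2$ for $i=1,\dots,k$ and degree $0$ otherwise, and $e_{i_1}\cdots e_{i_s}$ degree $\deg(e_{i_1})+\cdots+\deg(e_{i_s})$. $R$ is graded by letting its degree-$g$ component consist of the matrices all of whose entries have degree $g$. For a $\mathbb{Z}_2$-graded algebra, $T_{\mathbb{Z}_2}(\cdot)$ is its ideal of graded polynomial identities in the free algebra on countably many degree-$0$ and degree-$1$ variables; the product of ideals is the usual one. *)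

theory Defs
  imports "HOL-Library.Poly_Mapping" "HOL-Library.Product_Plus"
begin

text \<open>The key A (a finite set of naturals) stands for the basis monomial e_{a1}...e_{as},
  a1<...<as. Generator index i (0-based) corresponds to e_{i+1} of the paper.\<close>

type_synonym 'a grass = "nat set \<Rightarrow>\<^sub>0 'a"

definition grass_sign :: "nat set \<Rightarrow> nat set \<Rightarrow> 'a::comm_ring_1" where
  "grass_sign A B = (if finite A \<and> finite B \<and> A \<inter> B = {}
     then (-1) ^ card {(a,b). a \<in> A \<and> b \<in> B \<and> b < a} else 0)"

definition grass_mult :: "'a::comm_ring_1 grass \<Rightarrow> 'a grass \<Rightarrow> 'a grass" where
  "grass_mult x y = (\<Sum>A\<in>Poly_Mapping.keys x. \<Sum>B\<in>Poly_Mapping.keys y.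
      Poly_Mapping.single (A \<union> B) (grass_sign A B * Poly_Mapping.lookup x A * Poly_Mapping.lookup y B))"

definition grass_one :: "'a::comm_ring_1 grass" where
  "grass_one = Poly_Mapping.single {} 1"

definition grass_smult :: "'a::comm_ring_1 \<Rightarrow> 'a grass \<Rightarrow> 'a grass" where
  "grass_smult c x = grass_mult (Poly_Mapping.single {} c) x"

text \<open>Grading deg_{k*}: generator e_{i+1} (key i) is odd iff i < k, i.e. e_1..e_k odd.
  An element is homogeneous of degree g (True = 1, False = 0) if it is an element of E
  (all Poly_Mapping.keys finite) and each basis monomial occurring in it has degree g.\<close>

definition grass_hom :: "nat \<Rightarrow> bool \<Rightarrow> 'a::comm_ring_1 grass \<Rightarrow> bool" where
  "grass_hom k g x = (\<forall>A\<in>Poly_Mapping.keys x. finite A \<and> (odd (card (A \<inter> {..<k})) = g))"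

text \<open>(a,b,c) represents the matrix [[a,b],[0,c]].\<close>

type_synonym 'a utm = "'a grass \<times> 'a grass \<times> 'a grass"

definition utm_zero :: "'a::comm_ring_1 utm" where
  "utm_zero = 0"

definition utm_add :: "'a::comm_ring_1 utm \<Rightarrow> 'a utm \<Rightarrow> 'a utm" where
  "utm_add X Y = X + Y"

definition utm_mult :: "'a::comm_ring_1 utm \<Rightarrow> 'a utm \<Rightarrow> 'a utm" where
  "utm_mult X Y = (case X of (a,b,c) \<Rightarrow> case Y of (a',b',c') \<Rightarrow>
     (grass_mult a a', grass_mult a b' + grass_mult b c', grass_mult c c'))"

definition utm_one :: "'a::comm_ring_1 utm" where
  "utm_one = (grass_one, 0, grass_one)"

definition utm_smult :: "'a::comm_ring_1 \<Rightarrow> 'a utm \<Rightarrow> 'a utm" where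
  "utm_smult c X = (case X of (a,b,d) \<Rightarrow> (grass_smult c a, grass_smult c b, grass_smult c d))"

definition utm_hom :: "nat \<Rightarrow> bool \<Rightarrow> 'a::comm_ring_1 utm \<Rightarrow> bool" where
  "utm_hom k g X = (case X of (a,b,c) \<Rightarrow> grass_hom k g a \<and> grass_hom k g b \<and> grass_hom k g c)"

text \<open>Variables are pairs (i, g): the i-th variable of Z_2-degree g (True = 1, False = 0).
  Polynomials are finitely supported functions on words (monomials).\<close>

type_synonym gvar = "nat \<times> bool"
type_synonym 'a fpoly = "gvar list \<Rightarrow>\<^sub>0 'a"

definition fpoly_mult :: "'a::comm_ring_1 fpoly \<Rightarrow> 'a fpoly \<Rightarrow> 'a fpoly" where
  "fpoly_mult p q = (\<Sum>u\<in>Poly_Mapping.keys p. \<Sum>v\<in>Poly_Mapping.keys q. Poly_Mapping.single (u @ v) (Poly_Mapping.lookup p u * Poly_Mapping.lookup q v))"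

definition eval_in ::
  "('b \<Rightarrow> 'b \<Rightarrow> 'b) \<Rightarrow> 'b \<Rightarrow> ('a \<Rightarrow> 'b \<Rightarrow> 'b)
    \<Rightarrow> (gvar \<Rightarrow> 'b) \<Rightarrow> 'a::comm_ring_1 fpoly \<Rightarrow> 'b::comm_monoid_add" where
  "eval_in m u sm s p =
     (\<Sum>w\<in>Poly_Mapping.keys p. sm (Poly_Mapping.lookup p w) (foldr (\<lambda>v acc. m (s v) acc) w u))"

definition T_E :: "nat \<Rightarrow> 'a::comm_ring_1 fpoly set" where
  "T_E k = {p. \<forall>s. (\<forall>i g. grass_hom k g (s (i, g))) \<longrightarrow>
     eval_in grass_mult grass_one grass_smult s p = 0}"

definition T_R :: "nat \<Rightarrow> 'a::comm_ring_1 fpoly set" where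
  "T_R k = {p. \<forall>s. (\<forall>i g. utm_hom k g (s (i, g))) \<longrightarrow>
     eval_in utm_mult utm_one utm_smult s p = 0}"

definition ideal_prod :: "'a::comm_ring_1 fpoly set \<Rightarrow> 'a fpoly set \<Rightarrow> 'a fpoly set" where
  "ideal_prod I J = {p. \<exists>(n::nat) f g. (\<forall>i<n. f i \<in> I \<and> g i \<in> J) \<and> p = (\<Sum>i<n. fpoly_mult (f i) (g i))}"

end

theory Submission
  imports Defs
begin

abbreviation lk where "lk \<equiv> Poly_Mapping.lookup"
abbreviation ks where "ks \<equiv> Poly_Mapping.keys"

lemma gm_lookup_gen:
  fixes x y :: "'a::comm_ring_1 grass"
  assumes "finite S" "ks x \<subseteq> S" "finite T" "ks y \<subseteq> T"
  shows "lk (grass_mult x y) K = (\<Sum>A\<in>S. \<Sum>B\<in>T. if A \<union> B = K then grass_sign A B * lk x A * lk y B else 0)"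
proof -
  have "lk (grass_mult x y) K = (\<Sum>A\<in>ks x. \<Sum>B\<in>ks y. if A \<union> B = K then grass_sign A B * lk x A * lk y B else 0)"
    unfolding grass_mult_def lookup_sum lookup_single by (simp add: when_def)
  also have "\<dots> = (\<Sum>A\<in>ks x. \<Sum>B\<in>T. if A \<union> B = K then grass_sign A B * lk x A * lk y B else 0)"
    by (rule sum.cong[OF refl], rule sum.mono_neutral_left) (use assms in \<open>auto simp: in_keys_iff\<close>)
  also have "\<dots> = (\<Sum>A\<in>S. \<Sum>B\<in>T. if A \<union> B = K then grass_sign A B * lk x A * lk y B else 0)"
    by (rule sum.mono_neutral_left) (use assms in \<open>auto simp: in_keys_iff intro!: sum.neutral\<close>)
  finally show ?thesis .
qed

lemma gm_lookup:
  fixes x y :: "'a::comm_ring_1 grass"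
  shows "lk (grass_mult x y) K = (\<Sum>A\<in>ks x. \<Sum>B\<in>ks y. if A \<union> B = K then grass_sign A B * lk x A * lk y B else 0)"
  by (rule gm_lookup_gen) auto

lemma gm_zero_left[simp]: "grass_mult 0 y = 0" by (simp add: grass_mult_def)
lemma gm_zero_right[simp]: "grass_mult x 0 = 0" by (simp add: grass_mult_def)

lemma gm_add_left: "grass_mult (x + x') y = grass_mult x y + grass_mult (x'::'a::comm_ring_1 grass) y"
proof (rule poly_mapping_eqI)
  fix K
  let ?S = "ks x \<union> ks x'" 
  have s: "ks (x + x') \<subseteq> ?S" by (rule keys_add)
  show "lk (grass_mult (x + x') y) K = lk (grass_mult x y + grass_mult x' y) K"
    unfolding lookup_add
    by (subst (1 2 3) gm_lookup_gen[where S="?S" and T="ks y"])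
       (use s in \<open>auto simp: lookup_add algebra_simps sum.distrib[symmetric] intro!: sum.cong\<close>)
qed

lemma gm_add_right: "grass_mult x (y + y') = grass_mult x y + grass_mult x (y'::'a::comm_ring_1 grass)"
proof (rule poly_mapping_eqI)
  fix K
  let ?T = "ks y \<union> ks y'" 
  have s: "ks (y + y') \<subseteq> ?T" by (rule keys_add)
  show "lk (grass_mult x (y + y')) K = lk (grass_mult x y + grass_mult x y') K"
    unfolding lookup_add
    by (subst (1 2 3) gm_lookup_gen[where S="ks x" and T="?T"])
       (use s in \<open>auto simp: lookup_add algebra_simps sum.distrib[symmetric] intro!: sum.cong\<close>)
qed

lemma gm_sum_left: "grass_mult (\<Sum>i\<in>I. f i) y = (\<Sum>i\<in>I. grass_mult (f i) (y::'a::comm_ring_1 grass))"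
  by (induction I rule: infinite_finite_induct) (auto simp: gm_add_left)
lemma gm_sum_right: "grass_mult y (\<Sum>i\<in>I. f i) = (\<Sum>i\<in>I. grass_mult (y::'a::comm_ring_1 grass) (f i))"
  by (induction I rule: infinite_finite_induct) (auto simp: gm_add_right)

lemma pm_expand: "x = (\<Sum>A\<in>ks x. Poly_Mapping.single A (lk x A))"
proof (rule poly_mapping_eqI)
  fix K show "lk x K = lk (\<Sum>A\<in>ks x. Poly_Mapping.single A (lk x A)) K"
    unfolding lookup_sum lookup_single by (cases "K \<in> ks x") (auto simp: when_def in_keys_iff)
qed

lemma gm_single: "grass_mult (Poly_Mapping.single A a) (Poly_Mapping.single B b) =
   Poly_Mapping.single (A \<union> B) (grass_sign A B * a * (b::'a::comm_ring_1))"
  by (simp add: grass_mult_def)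

definition inv_set :: "nat set \<Rightarrow> nat set \<Rightarrow> (nat \<times> nat) set" where
  "inv_set A B = {(a,b). a \<in> A \<and> b \<in> B \<and> b < a}"

lemma inv_set_fin: "finite A \<Longrightarrow> finite B \<Longrightarrow> finite (inv_set A B)"
  by (rule finite_subset[of _ "A \<times> B"]) (auto simp: inv_set_def)

lemma sign_eq: "grass_sign A B = (if finite A \<and> finite B \<and> A \<inter> B = {} then (-1) ^ card (inv_set A B) else 0)"
  by (simp add: grass_sign_def inv_set_def)

lemma sign_cocycle:
  "grass_sign A B * grass_sign (A \<union> B) C = (grass_sign B C * grass_sign A (B \<union> C) :: 'a::comm_ring_1)"
proof (cases "finite A \<and> finite B \<and> finite C \<and> A \<inter> B = {} \<and> A \<inter> C = {} \<and> B \<inter> C = {}")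
  case True
  then have f: "finite A" "finite B" "finite C" and d: "A \<inter> B = {}" "A \<inter> C = {}" "B \<inter> C = {}" by auto
  have e1: "inv_set (A \<union> B) C = inv_set A C \<union> inv_set B C" by (auto simp: inv_set_def)
  have e2: "inv_set A (B \<union> C) = inv_set A B \<union> inv_set A C" by (auto simp: inv_set_def)
  have c1: "card (inv_set (A \<union> B) C) = card (inv_set A C) + card (inv_set B C)"
    unfolding e1 by (rule card_Un_disjoint[OF inv_set_fin inv_set_fin]) (use f d in \<open>auto simp: inv_set_def\<close>)
  have c2: "card (inv_set A (B \<union> C)) = card (inv_set A B) + card (inv_set A C)"
    unfolding e2 by (rule card_Un_disjoint[OF inv_set_fin inv_set_fin]) (use f d in \<open>auto simp: inv_set_def\<close>)
  show ?thesis using f d by (simp add: sign_eq c1 c2 power_add Int_Un_distrib Int_Un_distrib2 Int_commute)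
next
  case False
  then show ?thesis by (auto simp: sign_eq)
qed

lemma gm_assoc: "grass_mult (grass_mult x y) z = grass_mult x (grass_mult y (z::'a::comm_ring_1 grass))"
proof -
  have "grass_mult (grass_mult x y) z = (\<Sum>C\<in>ks z. \<Sum>B\<in>ks y. \<Sum>A\<in>ks x.
     grass_mult (grass_mult (Poly_Mapping.single A (lk x A)) (Poly_Mapping.single B (lk y B))) (Poly_Mapping.single C (lk z C)))"
    apply (subst (1) pm_expand[of x], subst (1) pm_expand[of y], subst (1) pm_expand[of z])
    by (simp add: gm_sum_left gm_sum_right)
  also have "\<dots> = (\<Sum>C\<in>ks z. \<Sum>B\<in>ks y. \<Sum>A\<in>ks x.
     grass_mult (Poly_Mapping.single A (lk x A)) (grass_mult (Poly_Mapping.single B (lk y B)) (Poly_Mapping.single C (lk z C))))"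
  proof -
    have "\<And>A B C a b c. grass_mult (grass_mult (Poly_Mapping.single A a) (Poly_Mapping.single B b)) (Poly_Mapping.single C c)
      = grass_mult (Poly_Mapping.single A (a::'a)) (grass_mult (Poly_Mapping.single B b) (Poly_Mapping.single C c))"
    proof -
      fix A B C and a b c :: 'a
      have "grass_sign A B * grass_sign (A \<union> B) C * a * b * c = grass_sign B C * grass_sign A (B \<union> C) * a * b * c"
        by (subst sign_cocycle) (rule refl)
      then show "grass_mult (grass_mult (Poly_Mapping.single A a) (Poly_Mapping.single B b)) (Poly_Mapping.single C c)
      = grass_mult (Poly_Mapping.single A (a::'a)) (grass_mult (Poly_Mapping.single B b) (Poly_Mapping.single C c))"
        by (simp add: gm_single Un_assoc algebra_simps)
    qed
    then show ?thesis by simp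
  qed
  also have "\<dots> = grass_mult x (grass_mult y z)"
    apply (rule sym)
    apply (subst (1) pm_expand[of x], subst (1) pm_expand[of y], subst (1) pm_expand[of z])
    by (simp add: gm_sum_left gm_sum_right)
  finally show ?thesis .
qed

lemma sign_nz: "grass_sign A B \<noteq> (0::'a::comm_ring_1) \<Longrightarrow> finite A \<and> finite B \<and> A \<inter> B = {}"
  by (auto simp: grass_sign_def split: if_splits)

lemma sign_zero: "A \<inter> B \<noteq> {} \<Longrightarrow> grass_sign A B = 0"
  by (simp add: grass_sign_def)

lemma sign_empty_left: "grass_sign {} B = (if finite B then 1 else 0)"
  by (simp add: grass_sign_def)
lemma sign_empty_right: "grass_sign A {} = (if finite A then 1 else 0)"
  by (simp add: grass_sign_def)

lemma step_left:
  "(if A \<union> B = K then grass_sign A B * a * lk y B else 0) =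
   (if B = K - A then (if A \<subseteq> K then grass_sign A (K - A) * (a::'a::comm_ring_1) * lk y (K - A) else 0) else 0)"
proof (cases "A \<inter> B = {}")
  case True
  then have e: "(A \<union> B = K) = (B = K - A \<and> A \<subseteq> K)" by blast
  show ?thesis unfolding e by simp
next
  case False
  then have "B \<noteq> K - A" by blast
  with False show ?thesis by (simp add: sign_zero)
qed

lemma step_right:
  "(if A \<union> B = K then grass_sign A B * lk x A * b else 0) =
   (if A = K - B then (if B \<subseteq> K then grass_sign (K - B) B * lk x (K - B) * (b::'a::comm_ring_1) else 0) else 0)"
proof (cases "A \<inter> B = {}")
  case True
  then have e: "(A \<union> B = K) = (A = K - B \<and> B \<subseteq> K)" by blast
  show ?thesis unfolding e by simp
next
  case False
  then have "A \<noteq> K - B" by blast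
  with False show ?thesis by (simp add: sign_zero)
qed

lemma gm_lookup_single_left:
  fixes y :: "'a::comm_ring_1 grass"
  shows "lk (grass_mult (Poly_Mapping.single A a) y) K =
    (if A \<subseteq> K then grass_sign A (K - A) * a * lk y (K - A) else 0)"
proof -
  have "lk (grass_mult (Poly_Mapping.single A a) y) K =
     (\<Sum>A'\<in>{A}. \<Sum>B\<in>ks y \<union> {K - A}. if A' \<union> B = K then grass_sign A' B * lk (Poly_Mapping.single A a) A' * lk y B else 0)"
    by (rule gm_lookup_gen) auto
  also have "\<dots> = (\<Sum>B\<in>ks y \<union> {K - A}. if A \<union> B = K then grass_sign A B * a * lk y B else 0)"
    by (simp cong: if_cong)
  also have "\<dots> = (\<Sum>B\<in>ks y \<union> {K - A}. if B = K - A then (if A \<subseteq> K then grass_sign A (K - A) * a * lk y (K - A) else 0) else 0)"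
    by (rule sum.cong[OF refl], rule step_left)
  also have "\<dots> = (if A \<subseteq> K then grass_sign A (K - A) * a * lk y (K - A) else 0)"
    by (rule trans[OF sum.delta]) auto
  finally show ?thesis .
qed

lemma gm_lookup_single_right:
  fixes x :: "'a::comm_ring_1 grass"
  shows "lk (grass_mult x (Poly_Mapping.single B b)) K =
    (if B \<subseteq> K then grass_sign (K - B) B * lk x (K - B) * b else 0)"
proof -
  have "lk (grass_mult x (Poly_Mapping.single B b)) K =
     (\<Sum>A\<in>ks x \<union> {K - B}. \<Sum>B'\<in>{B}. if A \<union> B' = K then grass_sign A B' * lk x A * lk (Poly_Mapping.single B b) B' else 0)"
    by (rule gm_lookup_gen) auto
  also have "\<dots> = (\<Sum>A\<in>ks x \<union> {K - B}. if A \<union> B = K then grass_sign A B * lk x A * b else 0)"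
    by (simp cong: if_cong)
  also have "\<dots> = (\<Sum>A\<in>ks x \<union> {K - B}. if A = K - B then (if B \<subseteq> K then grass_sign (K - B) B * lk x (K - B) * b else 0) else 0)"
    by (rule sum.cong[OF refl], rule step_right)
  also have "\<dots> = (if B \<subseteq> K then grass_sign (K - B) B * lk x (K - B) * b else 0)"
    by (rule trans[OF sum.delta]) auto
  finally show ?thesis .
qed

lemma smult_lookup: "lk (grass_smult c (x::'a::comm_ring_1 grass)) K = (if finite K then c * lk x K else 0)"
  by (simp add: grass_smult_def gm_lookup_single_left sign_empty_left)

definition fin :: "'a::comm_ring_1 grass \<Rightarrow> bool" where
  "fin x = (\<forall>A\<in>ks x. finite A)"

lemma fin_lookup: "fin x \<Longrightarrow> \<not> finite K \<Longrightarrow> lk x K = 0"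
  by (auto simp: fin_def in_keys_iff)

lemma gm_one_left: "fin x \<Longrightarrow> grass_mult grass_one x = x"
  by (rule poly_mapping_eqI) (auto simp: grass_one_def gm_lookup_single_left sign_empty_left fin_lookup)

lemma gm_one_right: "fin x \<Longrightarrow> grass_mult x grass_one = x"
  by (rule poly_mapping_eqI) (auto simp: grass_one_def gm_lookup_single_right sign_empty_right fin_lookup)

lemma gm_keys: "K \<in> ks (grass_mult x (y::'a::comm_ring_1 grass)) \<Longrightarrow>
   \<exists>A\<in>ks x. \<exists>B\<in>ks y. K = A \<union> B \<and> A \<inter> B = {} \<and> finite A \<and> finite B"
proof -
  assume "K \<in> ks (grass_mult x y)"
  then have "lk (grass_mult x y) K \<noteq> 0" by (simp add: in_keys_iff)
  then have "(\<Sum>A\<in>ks x. \<Sum>B\<in>ks y. if A \<union> B = K then grass_sign A B * lk x A * lk y B else 0) \<noteq> 0"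
    unfolding gm_lookup .
  then obtain A where A: "A \<in> ks x" and s1: "(\<Sum>B\<in>ks y. if A \<union> B = K then grass_sign A B * lk x A * lk y B else 0) \<noteq> 0"
    by (rule sum.not_neutral_contains_not_neutral)
  obtain B where B: "B \<in> ks y" and nz: "(if A \<union> B = K then grass_sign A B * lk x A * lk y B else 0) \<noteq> 0"
    using s1 by (rule sum.not_neutral_contains_not_neutral)
  from nz have "A \<union> B = K" by (simp split: if_splits)
  moreover from nz have "grass_sign A B \<noteq> (0::'a)" by (auto split: if_splits)
  ultimately show ?thesis using A B sign_nz[of A B] by blast
qed

lemma fin_gm[simp]: "fin (grass_mult x y)"
  using gm_keys unfolding fin_def by blast
lemma fin_one[simp]: "fin grass_one" by (simp add: grass_one_def fin_def)
lemma fin_zero[simp]: "fin 0" by (simp add: fin_def)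
lemma fin_add[simp]: "fin x \<Longrightarrow> fin y \<Longrightarrow> fin (x + y)"
  using keys_add[of x y] unfolding fin_def by blast
lemma fin_smult[simp]: "fin (grass_smult c x)" by (simp add: grass_smult_def)

lemma scalar_central: "grass_mult x (Poly_Mapping.single {} c) = grass_mult (Poly_Mapping.single {} c) (x::'a::comm_ring_1 grass)"
  apply (rule poly_mapping_eqI)
  apply (simp only: gm_lookup_single_right gm_lookup_single_left Diff_empty empty_subsetI if_True sign_empty_right sign_empty_left)
  by (simp add: algebra_simps)

lemma sm_gm_left: "grass_mult (grass_smult c x) y = grass_smult c (grass_mult x (y::'a::comm_ring_1 grass))"
  unfolding grass_smult_def by (rule gm_assoc)
lemma sm_gm_right: "grass_mult x (grass_smult c y) = grass_smult c (grass_mult x (y::'a::comm_ring_1 grass))"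
  unfolding grass_smult_def
  by (subst (1 2) gm_assoc[symmetric], subst scalar_central, rule refl)
lemma sm_sm: "grass_smult c (grass_smult d x) = grass_smult (c * d) (x::'a::comm_ring_1 grass)"
  unfolding grass_smult_def
proof -
  have e: "grass_sign {} {} = (1::'a)" by (simp add: grass_sign_def)
  show "grass_mult (Poly_Mapping.single {} c) (grass_mult (Poly_Mapping.single {} d) x) = grass_mult (Poly_Mapping.single {} (c * d)) x"
    by (subst gm_assoc[symmetric], subst gm_single, simp only: e Un_empty_left mult_1_left)
qed
lemma sm_add_scalar: "grass_smult (c + d) x = grass_smult c x + grass_smult d (x::'a::comm_ring_1 grass)"
  by (simp add: grass_smult_def single_add gm_add_left)
lemma sm_add_vec: "grass_smult c (x + y) = grass_smult c x + grass_smult c (y::'a::comm_ring_1 grass)"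
  by (simp add: grass_smult_def gm_add_right)
lemma sm_zero_scalar[simp]: "grass_smult 0 x = (0::'a::comm_ring_1 grass)"
  by (simp add: grass_smult_def)
lemma sm_zero_vec[simp]: "grass_smult c 0 = (0::'a::comm_ring_1 grass)"
  by (simp add: grass_smult_def)

locale evalg =
  fixes m :: "'b::ab_group_add \<Rightarrow> 'b \<Rightarrow> 'b" and u :: 'b and sm :: "'a::comm_ring_1 \<Rightarrow> 'b \<Rightarrow> 'b"
    and F :: "'b \<Rightarrow> bool"
  assumes add_l: "m (x + y) z = m x z + m y z" and add_r: "m x (y + z) = m x y + m x z"
    and assoc: "m (m x y) z = m x (m y z)"
    and one_l: "F y \<Longrightarrow> m u y = y" and F_m: "F (m x y)" and F_u: "F u"
    and sm_add: "sm (c + d) x = sm c x + sm d x" and sm_0: "sm 0 x = 0"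
    and sm_m: "m (sm c x) (sm d y) = sm (c * d) (m x y)"
begin

lemma m_0l: "m 0 z = 0"
  using add_l[of 0 0 z] by simp
lemma m_0r: "m z 0 = 0"
  using add_r[of z 0 0] by simp

lemma m_sum_l: "m (\<Sum>i\<in>I. f i) z = (\<Sum>i\<in>I. m (f i) z)"
  by (induction I rule: infinite_finite_induct) (auto simp: add_l m_0l)
lemma m_sum_r: "m z (\<Sum>i\<in>I. f i) = (\<Sum>i\<in>I. m z (f i))"
  by (induction I rule: infinite_finite_induct) (auto simp: add_r m_0r)

definition mon :: "(gvar \<Rightarrow> 'b) \<Rightarrow> gvar list \<Rightarrow> 'b" where
  "mon s w = foldr (\<lambda>v acc. m (s v) acc) w u"

lemma F_mon: "F (mon s w)"
  by (cases w) (auto simp: mon_def F_u F_m)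

lemma foldr_acc: "F acc \<Longrightarrow> foldr (\<lambda>v acc. m (s v) acc) w acc = m (mon s w) acc"
  by (induction w) (auto simp: mon_def one_l assoc)

lemma mon_append: "mon s (w @ v) = m (mon s w) (mon s v)"
  using foldr_acc[OF F_mon[of s v], where s=s and w=w] by (simp add: mon_def)

lemma eval_gen:
  assumes "finite W" "Poly_Mapping.keys p \<subseteq> W"
  shows "eval_in m u sm s p = (\<Sum>w\<in>W. sm (Poly_Mapping.lookup p w) (mon s w))"
  unfolding eval_in_def mon_def
  by (rule sum.mono_neutral_left) (use assms in \<open>auto simp: in_keys_iff sm_0\<close>)

lemma eval_add: "eval_in m u sm s (p + q) = eval_in m u sm s p + eval_in m u sm s q"
proof -
  let ?W = "Poly_Mapping.keys p \<union> Poly_Mapping.keys q"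
  have "Poly_Mapping.keys (p + q) \<subseteq> ?W" by (rule keys_add)
  then show ?thesis
    by (subst (1 2 3) eval_gen[where W="?W"]) (auto simp: lookup_add sm_add sum.distrib)
qed

lemma eval_zero: "eval_in m u sm s 0 = 0"
  by (simp add: eval_in_def)

lemma eval_sum: "eval_in m u sm s (\<Sum>i\<in>I. p i) = (\<Sum>i\<in>I. eval_in m u sm s (p i))"
  by (induction I rule: infinite_finite_induct) (auto simp: eval_add eval_zero)

lemma eval_single: "eval_in m u sm s (Poly_Mapping.single w c) = sm c (mon s w)"
  by (subst eval_gen[where W="{w}"]) auto

lemma eval_fmult: "eval_in m u sm s (fpoly_mult f g) = m (eval_in m u sm s f) (eval_in m u sm s g)"
proof -
  have "eval_in m u sm s (fpoly_mult f g) =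
    (\<Sum>a\<in>Poly_Mapping.keys f. \<Sum>b\<in>Poly_Mapping.keys g. sm (Poly_Mapping.lookup f a * Poly_Mapping.lookup g b) (m (mon s a) (mon s b)))"
    unfolding fpoly_mult_def by (simp add: eval_sum eval_single mon_append)
  also have "\<dots> = (\<Sum>a\<in>Poly_Mapping.keys f. \<Sum>b\<in>Poly_Mapping.keys g. m (sm (Poly_Mapping.lookup f a) (mon s a)) (sm (Poly_Mapping.lookup g b) (mon s b)))"
    by (simp add: sm_m)
  also have "\<dots> = m (eval_in m u sm s f) (eval_in m u sm s g)"
    unfolding eval_in_def mon_def by (simp add: m_sum_l m_sum_r, rule sum.swap)
  finally show ?thesis .
qed

end

interpretation gE: evalg grass_mult grass_one grass_smult fin
proof unfold_locales
  fix x y z :: "'a::comm_ring_1 grass" and c d :: 'a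
  show "grass_mult (x + y) z = grass_mult x z + grass_mult y z" by (rule gm_add_left)
  show "grass_mult x (y + z) = grass_mult x y + grass_mult x z" by (rule gm_add_right)
  show "grass_mult (grass_mult x y) z = grass_mult x (grass_mult y z)" by (rule gm_assoc)
  show "fin y \<Longrightarrow> grass_mult grass_one y = y" by (rule gm_one_left)
  show "fin (grass_mult x y)" by simp
  show "fin (grass_one :: 'a grass)" by simp
  show "grass_smult (c + d) x = grass_smult c x + grass_smult d x" by (rule sm_add_scalar)
  show "grass_smult 0 x = 0" by simp
  show "grass_mult (grass_smult c x) (grass_smult d y) = grass_smult (c * d) (grass_mult x y)"
    by (simp only: sm_gm_left sm_gm_right sm_sm mult.commute[of d c])
qed

definition finU :: "'a::comm_ring_1 utm \<Rightarrow> bool" where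
  "finU X = (fin (fst X) \<and> fin (fst (snd X)) \<and> fin (snd (snd X)))"

lemma um_simp[simp]: "utm_mult (a, b, c) (a', b', c') = (grass_mult a a', grass_mult a b' + grass_mult b c', grass_mult c c')"
  by (simp add: utm_mult_def)
lemma usm_simp[simp]: "utm_smult r (a, b, c) = (grass_smult r a, grass_smult r b, grass_smult r c)"
  by (simp add: utm_smult_def)

interpretation gR: evalg utm_mult utm_one utm_smult finU
proof unfold_locales
  fix x y z :: "'a::comm_ring_1 utm"
  show "utm_mult (x + y) z = utm_mult x z + utm_mult y z"
    by (cases x; cases y; cases z) (simp add: gm_add_left)
  show "utm_mult x (y + z) = utm_mult x y + utm_mult x z"
    by (cases x; cases y; cases z) (simp add: gm_add_right)
  show "utm_mult (utm_mult x y) z = utm_mult x (utm_mult y z)"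
    by (cases x; cases y; cases z) (simp add: gm_add_right gm_add_left gm_assoc)
  show "finU y \<Longrightarrow> utm_mult utm_one y = y"
    by (cases y) (simp add: finU_def utm_one_def gm_one_left)
  show "finU (utm_mult x y)"
    by (cases x; cases y) (simp add: finU_def)
  show "finU (utm_one :: 'a utm)" by (simp add: finU_def utm_one_def)
next
  fix c d :: "'a::comm_ring_1" and x y :: "'a utm"
  show "utm_smult (c + d) x = utm_smult c x + utm_smult d x"
    by (cases x) (simp add: sm_add_scalar)
  show "utm_smult 0 x = 0" by (cases x) (simp add: zero_prod_def)
  show "utm_mult (utm_smult c x) (utm_smult d y) = utm_smult (c * d) (utm_mult x y)"
    by (cases x; cases y) (simp only: um_simp usm_simp sm_gm_left sm_gm_right sm_sm sm_add_vec mult.commute[of d c])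
qed

lemma fst_um: "fst (utm_mult X Y) = grass_mult (fst X) (fst Y)"
  by (cases X; cases Y) simp
lemma trd_um: "snd (snd (utm_mult X Y)) = grass_mult (snd (snd X)) (snd (snd Y))"
  by (cases X; cases Y) simp
lemma fst_usm: "fst (utm_smult c X) = grass_smult c (fst X)"
  by (cases X) simp
lemma trd_usm: "snd (snd (utm_smult c X)) = grass_smult c (snd (snd X))"
  by (cases X) simp

lemma fst_foldr: "fst (foldr (\<lambda>v acc. utm_mult (s v) acc) w utm_one) =
  foldr (\<lambda>v acc. grass_mult (fst (s v)) acc) w (grass_one :: 'a::comm_ring_1 grass)"
  by (induction w) (simp_all add: utm_one_def fst_um)
lemma trd_foldr: "snd (snd (foldr (\<lambda>v acc. utm_mult (s v) acc) w utm_one)) =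
  foldr (\<lambda>v acc. grass_mult (snd (snd (s v))) acc) w (grass_one :: 'a::comm_ring_1 grass)"
  by (induction w) (simp_all add: utm_one_def trd_um)

lemma fst_eval: "fst (eval_in utm_mult utm_one utm_smult s (p :: 'a::comm_ring_1 fpoly)) =
   eval_in grass_mult grass_one grass_smult (\<lambda>v. fst (s v)) p"
  unfolding eval_in_def by (simp add: fst_sum fst_usm fst_foldr)
lemma trd_eval: "snd (snd (eval_in utm_mult utm_one utm_smult s (p :: 'a::comm_ring_1 fpoly))) =
   eval_in grass_mult grass_one grass_smult (\<lambda>v. snd (snd (s v))) p"
  unfolding eval_in_def by (simp add: snd_sum trd_usm trd_foldr)

lemma hom_fst: "utm_hom k g X \<Longrightarrow> grass_hom k g (fst X)"
  by (cases X) (simp add: utm_hom_def)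
lemma hom_trd: "utm_hom k g X \<Longrightarrow> grass_hom k g (snd (snd X))"
  by (cases X) (simp add: utm_hom_def)

lemma TE_eval_R:
  assumes f: "f \<in> T_E k" and s: "\<forall>i g. utm_hom k g (s (i, g))"
  shows "\<exists>b. eval_in utm_mult utm_one utm_smult s (f :: 'a::comm_ring_1 fpoly) = (0, b, 0)"
proof -
  have h1: "\<forall>i g. grass_hom k g ((\<lambda>v. fst (s v)) (i, g))" using s hom_fst by blast
  have h2: "\<forall>i g. grass_hom k g ((\<lambda>v. snd (snd (s v))) (i, g))" using s hom_trd by blast
  have fE: "\<And>s'. (\<forall>i g. grass_hom k g (s' (i,g))) \<Longrightarrow> eval_in grass_mult grass_one grass_smult s' f = 0"
    using f unfolding T_E_def by blast
  have "fst (eval_in utm_mult utm_one utm_smult s f) = 0"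
    unfolding fst_eval by (rule fE[of "\<lambda>v. fst (s v)", OF h1])
  moreover have "snd (snd (eval_in utm_mult utm_one utm_smult s f)) = 0"
    unfolding trd_eval by (rule fE[of "\<lambda>v. snd (snd (s v))", OF h2])
  ultimately show ?thesis by (metis prod.collapse)
qed

lemma ideal_sub: "ideal_prod (T_E k) (T_E k) \<subseteq> (T_R k :: 'a::comm_ring_1 fpoly set)"
proof
  fix p :: "'a fpoly" assume "p \<in> ideal_prod (T_E k) (T_E k)"
  then have "\<exists>(n::nat) f g. (\<forall>i<n. f i \<in> T_E k \<and> g i \<in> T_E k) \<and> p = (\<Sum>i<n. fpoly_mult (f i) (g i))"
    by (simp add: ideal_prod_def)
  then obtain n :: nat and f g where fg: "\<forall>i<n. f i \<in> T_E k \<and> g i \<in> T_E k" and p: "p = (\<Sum>i<n. fpoly_mult (f i) (g i))"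
    by blast
  show "p \<in> T_R k"
    unfolding T_R_def
  proof (intro CollectI allI impI)
    fix s :: "gvar \<Rightarrow> 'a utm" assume s: "\<forall>i g. utm_hom k g (s (i, g))"
    have "eval_in utm_mult utm_one utm_smult s (fpoly_mult (f i) (g i)) = 0" if "i < n" for i
    proof -
      have fi: "f i \<in> T_E k" and gi: "g i \<in> T_E k" using fg that by auto
      obtain b where b: "eval_in utm_mult utm_one utm_smult s (f i) = (0, b, 0)"
        using TE_eval_R[OF fi s] by blast
      obtain b' where b': "eval_in utm_mult utm_one utm_smult s (g i) = (0, b', 0)"
        using TE_eval_R[OF gi s] by blast
      show ?thesis by (simp add: gR.eval_fmult b b' zero_prod_def)
    qed
    then show "eval_in utm_mult utm_one utm_smult s p = 0"
      unfolding p gR.eval_sum by simp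
  qed
qed

definition Pm :: "nat \<Rightarrow> nat \<Rightarrow> 'a::comm_ring_1 grass \<Rightarrow> bool" where
  "Pm k n x = (\<forall>K\<in>ks x. n \<le> card (K \<inter> {..<k}))"

lemma Pm_zero[simp]: "Pm k n 0" by (simp add: Pm_def)
lemma Pm_0[simp]: "Pm k 0 x" by (simp add: Pm_def)

lemma Pm_add: "Pm k n x \<Longrightarrow> Pm k n y \<Longrightarrow> Pm k n (x + y)"
  using keys_add[of x y] unfolding Pm_def by blast

lemma Pm_mult: assumes "Pm k a x" "Pm k b y" shows "Pm k (a + b) (grass_mult x y)"
  unfolding Pm_def
proof
  fix K assume "K \<in> ks (grass_mult x y)"
  then obtain A B where A: "A \<in> ks x" and B: "B \<in> ks y" and K: "K = A \<union> B" and d: "A \<inter> B = {}"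
    and f: "finite A" "finite B"
    using gm_keys by blast
  have "card (K \<inter> {..<k}) = card (A \<inter> {..<k}) + card (B \<inter> {..<k})"
    unfolding K Int_Un_distrib2 by (rule card_Un_disjoint) (use f d in auto)
  moreover have "a \<le> card (A \<inter> {..<k})" "b \<le> card (B \<inter> {..<k})"
    using assms A B unfolding Pm_def by auto
  ultimately show "a + b \<le> card (K \<inter> {..<k})" by simp
qed

lemma Pm_hom1: "grass_hom k True x \<Longrightarrow> Pm k (Suc 0) x"
  unfolding Pm_def grass_hom_def
proof
  fix K assume "\<forall>A\<in>ks x. finite A \<and> odd (card (A \<inter> {..<k}) ) = True" "K \<in> ks x"
  then have "odd (card (K \<inter> {..<k}))" by auto
  then have "0 < card (K \<inter> {..<k})" by (rule odd_pos)
  then show "Suc 0 \<le> card (K \<inter> {..<k})" by simp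
qed

lemma Pm_vanish: assumes "Pm k (Suc k) x" shows "x = 0"
proof -
  have "ks x = {}"
  proof (rule ccontr)
    assume "ks x \<noteq> {}"
    then obtain K where "K \<in> ks x" by blast
    then have "Suc k \<le> card (K \<inter> {..<k})" using assms unfolding Pm_def by blast
    moreover have "card (K \<inter> {..<k}) \<le> k"
      using card_mono[of "{..<k}" "K \<inter> {..<k}"] by auto
    ultimately show False by simp
  qed
  then show ?thesis by simp
qed

definition PU :: "nat \<Rightarrow> nat \<Rightarrow> 'a::comm_ring_1 utm \<Rightarrow> bool" where
  "PU k n X = (Pm k n (fst X) \<and> Pm k n (fst (snd X)) \<and> Pm k n (snd (snd X)))"

lemma PU_mult: "PU k a X \<Longrightarrow> PU k b Y \<Longrightarrow> PU k (a + b) (utm_mult X Y)"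
  by (cases X; cases Y) (simp add: PU_def Pm_mult Pm_add)

lemma PU_pow:
  assumes "utm_hom k True Z"
  shows "PU k n (gR.mon (\<lambda>v. Z) (replicate n v))"
proof (induction n)
  case 0 show ?case by (simp add: gR.mon_def PU_def)
next
  case (Suc n)
  have "PU k (Suc 0) Z" using assms by (cases Z) (simp add: utm_hom_def PU_def Pm_hom1)
  from PU_mult[OF this Suc.IH] show ?case by (simp add: gR.mon_def)
qed

definition z0 :: gvar where "z0 = (0, True)"
definition wk :: "nat \<Rightarrow> gvar list" where "wk k = replicate (Suc k) z0"

lemma p0_TR: "Poly_Mapping.single (wk k) 1 \<in> (T_R k :: 'a::comm_ring_1 fpoly set)"
  unfolding T_R_def
proof (intro CollectI allI impI)
  fix s :: "gvar \<Rightarrow> 'a utm" assume s: "\<forall>i g. utm_hom k g (s (i, g))"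
  have Z: "utm_hom k True (s z0)" using s by (simp add: z0_def)
  have e: "gR.mon s (replicate n z0) = gR.mon (\<lambda>v. s z0) (replicate n z0)" for n
    unfolding gR.mon_def by (induction n) auto
  have "PU k (Suc k) (gR.mon s (wk k))" unfolding wk_def e by (rule PU_pow[OF Z])
  then have "gR.mon s (wk k) = 0"
    by (cases "gR.mon s (wk k)") (auto simp: PU_def dest: Pm_vanish simp: zero_prod_def)
  then show "eval_in utm_mult utm_one utm_smult s (Poly_Mapping.single (wk k) 1) = 0"
    by (simp add: gR.eval_single zero_prod_def)
qed

definition xk :: "nat \<Rightarrow> 'a::comm_ring_1 grass" where
  "xk k = (\<Sum>i<k. Poly_Mapping.single {i, k + i} 1)"

definition sE :: "nat \<Rightarrow> gvar \<Rightarrow> 'a::comm_ring_1 grass" where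
  "sE k v = (if v = z0 then xk k else 0)"

lemma xk_keys: "K \<in> ks (xk k :: 'a::comm_ring_1 grass) \<Longrightarrow> \<exists>i<k. K = {i, k + i}"
proof -
  assume "K \<in> ks (xk k :: 'a grass)"
  then have "(\<Sum>i<k. lk (Poly_Mapping.single {i, k + i} (1::'a)) K) \<noteq> 0"
    by (simp add: xk_def in_keys_iff lookup_sum)
  then obtain i where "i < k" "lk (Poly_Mapping.single {i, k + i} (1::'a)) K \<noteq> 0"
    by (rule sum.not_neutral_contains_not_neutral) simp
  then show ?thesis by (auto simp: lookup_single when_def split: if_splits)
qed

lemma sE_hom: "grass_hom k g (sE k (i, g) :: 'a::comm_ring_1 grass)"
proof (cases "(i, g) = z0")
  case True
  then have g: "g = True" by (simp add: z0_def)
  show ?thesis unfolding grass_hom_def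
  proof
    fix K assume "K \<in> ks (sE k (i, g) :: 'a grass)"
    then have "K \<in> ks (xk k :: 'a grass)" using True by (simp add: sE_def)
    then obtain i' where i': "i' < k" "K = {i', k + i'}" using xk_keys by blast
    then have "K \<inter> {..<k} = {i'}" by auto
    then show "finite K \<and> odd (card (K \<inter> {..<k})) = g" using i' g by simp
  qed
next
  case False
  then show ?thesis by (simp add: sE_def grass_hom_def)
qed

lemma mon_nonrep: "(\<exists>v\<in>set w. v \<noteq> z0) \<Longrightarrow> gE.mon (sE k) w = (0 :: 'a::comm_ring_1 grass)"
  by (induction w) (auto simp: gE.mon_def sE_def)

abbreviation Xp :: "nat \<Rightarrow> nat \<Rightarrow> 'a::comm_ring_1 grass" where
  "Xp k n \<equiv> gE.mon (sE k) (replicate n z0)"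

lemma Xp_Suc: "Xp k (Suc n) = grass_mult (xk k) (Xp k n)"
  by (simp add: gE.mon_def sE_def)

lemma mult_xk_lookup: "lk (grass_mult (xk k) y) K = (\<Sum>i<k. if {i, k + i} \<subseteq> K then
   grass_sign {i, k + i} (K - {i, k + i}) * lk (y::'a::comm_ring_1 grass) (K - {i, k + i}) else 0)"
  by (simp add: xk_def gm_sum_left lookup_sum gm_lookup_single_left cong: if_cong)

definition good :: "nat \<Rightarrow> nat \<Rightarrow> nat set \<Rightarrow> bool" where
  "good k m K = (\<exists>S. S \<subseteq> {..<k} \<and> card S = m \<and> K = S \<union> (\<lambda>i. k + i) ` S)"

fun cc :: "nat \<Rightarrow> 'a::comm_ring_1" where
  "cc 0 = 1"
| "cc (Suc m) = of_nat (Suc m) * (-1) ^ m * cc m"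

lemma sign_pair:
  assumes i: "i < k" and S: "S \<subseteq> {..<k}" and iS: "i \<notin> S"
  shows "grass_sign {i, k + i} (S \<union> (\<lambda>t. k + t) ` S) = ((-1) ^ card S :: 'a::comm_ring_1)"
proof -
  define B where "B = S \<union> (\<lambda>t. k + t) ` S"
  have fS: "finite S" using S finite_subset by blast
  have fB: "finite B" using fS by (simp add: B_def)
  have d: "{i, k + i} \<inter> B = {}" using i S iS by (auto simp: B_def)
  have e1: "inv_set {i, k + i} B = Pair i ` {b\<in>B. b < i} \<union> Pair (k + i) ` {b\<in>B. b < k + i}"
    by (auto simp: inv_set_def)
  have c1: "card (inv_set {i, k + i} B) = card {b\<in>B. b < i} + card {b\<in>B. b < k + i}"
    unfolding e1
    by (subst card_Un_disjoint) (use fB i in \<open>auto simp: card_image inj_on_def\<close>)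
  have e2: "{b\<in>B. b < i} = {t\<in>S. t < i}" using i by (auto simp: B_def)
  have e3: "{b\<in>B. b < k + i} = S \<union> (\<lambda>t. k + t) ` {t\<in>S. t < i}" using S by (auto simp: B_def)
  have c3: "card {b\<in>B. b < k + i} = card S + card {t\<in>S. t < i}"
    unfolding e3 by (subst card_Un_disjoint) (use fS S in \<open>auto simp: card_image inj_on_def\<close>)
  have "card (inv_set {i, k + i} B) = card S + 2 * card {t\<in>S. t < i}"
    using c1 e2 c3 by simp
  then show ?thesis
    unfolding B_def[symmetric] sign_eq using fB d by (simp add: power_add power_mult)
qed

lemma Xp_lookup: "lk (Xp k n :: 'a::comm_ring_1 grass) K = (if good k n K then cc n else 0)"
proof (induction n arbitrary: K)
  case 0
  have "good k 0 K \<longleftrightarrow> K = {}"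
  proof
    assume "good k 0 K"
    then obtain S where "S \<subseteq> {..<k}" "card S = 0" "K = S \<union> (\<lambda>i. k + i) ` S" by (auto simp: good_def)
    moreover then have "finite S" using finite_subset by blast
    ultimately show "K = {}" by simp
  next
    assume "K = {}" then show "good k 0 K" unfolding good_def by (intro exI[of _ "{}"]) auto
  qed
  moreover have "Xp k 0 = (grass_one :: 'a grass)" by (simp add: gE.mon_def)
  ultimately show ?case by (auto simp: grass_one_def lookup_single when_def)
next
  case (Suc n)
  let ?T = "\<lambda>i. {i, k + i}"
  have L: "lk (Xp k (Suc n) :: 'a grass) K = (\<Sum>i<k. if ?T i \<subseteq> K then
     grass_sign (?T i) (K - ?T i) * (if good k n (K - ?T i) then cc n else 0) else 0)"
    unfolding Xp_Suc mult_xk_lookup Suc.IH ..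
  show ?case
  proof (cases "good k (Suc n) K")
    case True
    then obtain S where S: "S \<subseteq> {..<k}" "card S = Suc n" and K: "K = S \<union> (\<lambda>i. k + i) ` S"
      by (auto simp: good_def)
    have fS: "finite S" using S finite_subset by blast
    have tm: "(if ?T i \<subseteq> K then grass_sign (?T i) (K - ?T i) * (if good k n (K - ?T i) then cc n else 0) else 0)
       = (if i \<in> S then (-1) ^ n * cc n else (0::'a))" if i: "i < k" for i
    proof (cases "i \<in> S")
      case True
      have KT: "K - ?T i = (S - {i}) \<union> (\<lambda>t. k + t) ` (S - {i})" using S True i unfolding K by auto
      have cS: "card (S - {i}) = n" using S True fS by simp
      have g: "good k n (K - ?T i)" unfolding good_def KT using S cS by (intro exI[of _ "S - {i}"]) auto
      have sg: "grass_sign (?T i) (K - ?T i) = ((-1) ^ n :: 'a)"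
        unfolding KT cS[symmetric] by (rule sign_pair) (use i S in auto)
      have "?T i \<subseteq> K" using True unfolding K by auto
      then show ?thesis using True g sg by simp
    next
      case False
      then have "i \<notin> K" using i S unfolding K by auto
      then show ?thesis using False by auto
    qed
    have "lk (Xp k (Suc n) :: 'a grass) K = (\<Sum>i<k. if i \<in> S then (-1) ^ n * cc n else (0::'a))"
      unfolding L using tm by (intro sum.cong) auto
    also have "\<dots> = (\<Sum>i\<in>{..<k} \<inter> S. (-1) ^ n * cc n)"
      by (rule sum.inter_restrict[symmetric]) simp
    also have "{..<k} \<inter> S = S" using S by auto
    also have "(\<Sum>i\<in>S. (-1) ^ n * cc n) = (of_nat (Suc n) * (-1) ^ n * cc n :: 'a)"
      using S by (simp add: mult.assoc)
    finally show ?thesis using True by simp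
  next
    case False
    have "(if ?T i \<subseteq> K then grass_sign (?T i) (K - ?T i) * (if good k n (K - ?T i) then cc n else 0) else 0) = (0::'a)"
      if i: "i < k" for i
    proof (cases "?T i \<subseteq> K \<and> good k n (K - ?T i)")
      case True
      then obtain S' where S': "S' \<subseteq> {..<k}" "card S' = n" and KS: "K - ?T i = S' \<union> (\<lambda>t. k + t) ` S'"
        by (auto simp: good_def)
      have fS: "finite S'" using S' finite_subset by blast
      have iS: "i \<notin> S'" using KS by auto
      have "K = insert i S' \<union> (\<lambda>t. k + t) ` insert i S'" using True KS by auto
      then have "good k (Suc n) K" unfolding good_def using S' i iS fS
        by (intro exI[of _ "insert i S'"]) auto
      with False show ?thesis by simp
    next
      case False then show ?thesis by auto
    qed
    then show ?thesis unfolding L using False by simp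
  qed
qed

definition Kj :: "nat \<Rightarrow> nat \<Rightarrow> nat set" where
  "Kj k j = {..<j} \<union> (\<lambda>i. k + i) ` {..<j}"

lemma good_Kj: assumes "j \<le> k" shows "good k n (Kj k j) \<longleftrightarrow> n = j"
proof
  assume "good k n (Kj k j)"
  then obtain S where S: "S \<subseteq> {..<k}" "card S = n" and K: "Kj k j = S \<union> (\<lambda>i. k + i) ` S"
    by (auto simp: good_def)
  have "S = (S \<union> (\<lambda>i. k + i) ` S) \<inter> {..<k}" using S by auto
  also have "\<dots> = Kj k j \<inter> {..<k}" using K by simp
  also have "\<dots> = {..<j}" using assms by (auto simp: Kj_def)
  finally show "n = j" using S by simp
next
  assume "n = j" then show "good k n (Kj k j)"
    unfolding good_def Kj_def using assms by (intro exI[of _ "{..<j}"]) auto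
qed

lemma cc_nz: "cc n \<noteq> (0::'a::field_char_0)"
  by (induction n) (auto simp del: of_nat_Suc)

lemma mon_lookup_Kj:
  assumes "j \<le> k"
  shows "lk (gE.mon (sE k) w :: 'a::comm_ring_1 grass) (Kj k j) = (if w = replicate j z0 then cc j else 0)"
proof (cases "\<exists>v\<in>set w. v \<noteq> z0")
  case True
  then have "w \<noteq> replicate j z0" by auto
  then show ?thesis by (simp add: mon_nonrep[OF True])
next
  case False
  then have w: "w = replicate (length w) z0" by (simp add: replicate_length_same)
  have "lk (gE.mon (sE k) w :: 'a grass) (Kj k j) = (if good k (length w) (Kj k j) then cc (length w) else 0)"
    by (subst w) (rule Xp_lookup)
  also have "\<dots> = (if w = replicate j z0 then cc j else 0)"
    using good_Kj[OF assms] w by (metis length_replicate)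
  finally show ?thesis .
qed

lemma finite_Kj: "finite (Kj k j)" by (simp add: Kj_def)

lemma TE_rep_zero:
  assumes f: "f \<in> T_E k" and j: "j \<le> k"
  shows "Poly_Mapping.lookup f (replicate j z0) = (0::'a::field_char_0)"
proof -
  let ?w = "replicate j z0"
  have "eval_in grass_mult grass_one grass_smult (sE k) f = (0 :: 'a grass)"
    using f sE_hom unfolding T_E_def by blast
  then have "0 = lk (eval_in grass_mult grass_one grass_smult (sE k) f :: 'a grass) (Kj k j)" by simp
  also have "\<dots> = (\<Sum>w\<in>ks f. lk f w * lk (gE.mon (sE k) w :: 'a grass) (Kj k j))"
    by (subst gE.eval_gen[where W="ks f"]) (auto simp: lookup_sum smult_lookup finite_Kj)
  also have "\<dots> = (\<Sum>w\<in>ks f. if w = ?w then lk f ?w * cc j else 0)"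
    by (rule sum.cong) (auto simp: mon_lookup_Kj[OF j])
  also have "\<dots> = lk f ?w * cc j"
    by (subst sum.delta) (auto simp: in_keys_iff)
  finally show ?thesis by (simp add: cc_nz)
qed

lemma fpoly_mult_lookup:
  "lk (fpoly_mult f g) w = (\<Sum>u\<in>ks f. \<Sum>v\<in>ks g. if u @ v = w then lk f u * lk g v else 0)"
  unfolding fpoly_mult_def by (simp add: lookup_sum lookup_single when_def)

lemma prod_rep_zero:
  assumes f: "f \<in> T_E k" and g: "g \<in> T_E k"
  shows "lk (fpoly_mult f g) (wk k) = (0::'a::field_char_0)"
  unfolding fpoly_mult_lookup
proof (intro sum.neutral ballI)
  fix u v assume "u \<in> ks f" "v \<in> ks g"
  show "(if u @ v = wk k then lk f u * lk g v else 0) = 0"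
  proof (cases "u @ v = wk k")
    case True
    then have su: "\<forall>x\<in>set u. x = z0" and sv: "\<forall>x\<in>set v. x = z0"
      by (metis Un_iff in_set_replicate set_append wk_def)+
    have u: "u = replicate (length u) z0" using su by (simp add: replicate_length_same)
    have v: "v = replicate (length v) z0" using sv by (simp add: replicate_length_same)
    have len: "length u + length v = Suc k" using arg_cong[OF True, of length] by (simp add: wk_def)
    show ?thesis
    proof (cases "length u \<le> k")
      case True
      then have "lk f u = 0" by (subst u) (rule TE_rep_zero[OF f])
      then show ?thesis by simp
    next
      case False
      then have "length v = 0" using len by linarith
      then have "lk g v = 0" by (subst v) (rule TE_rep_zero[OF g]; simp)
      then show ?thesis by simp
    qed
  qed simp
qed

theorem proposition7p2:
  fixes k :: nat
  assumes "k > 0"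
  shows "ideal_prod (T_E k :: 'a::field_char_0 fpoly set) (T_E k) \<subset> T_R k"
proof -
  have "Poly_Mapping.single (wk k) 1 \<notin> ideal_prod (T_E k :: 'a fpoly set) (T_E k)"
  proof
    assume "Poly_Mapping.single (wk k) 1 \<in> ideal_prod (T_E k :: 'a fpoly set) (T_E k)"
    then have "\<exists>(n::nat) f g. (\<forall>i<n. f i \<in> T_E k \<and> g i \<in> T_E k) \<and> Poly_Mapping.single (wk k) (1::'a) = (\<Sum>i<n. fpoly_mult (f i) (g i))"
      by (simp add: ideal_prod_def)
    then obtain n :: nat and f g where fg: "\<forall>i<n. f i \<in> T_E k \<and> g i \<in> T_E k"
      and p: "Poly_Mapping.single (wk k) (1::'a) = (\<Sum>i<n. fpoly_mult (f i) (g i))" by blast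
    have "(1::'a) = lk (\<Sum>i<n. fpoly_mult (f i) (g i)) (wk k)" unfolding p[symmetric] by simp
    also have "\<dots> = 0" unfolding lookup_sum using fg prod_rep_zero by (auto intro!: sum.neutral)
    finally show False by simp
  qed
  then show ?thesis using ideal_sub p0_TR by blast
qed

end
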